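(* Let $N(u)=\sum_{\alpha\in\mathbb C}m(\alpha)u^{\alpha}$ be a finite sum of powers with integer coefficients $m(\alpha)\in\mathbb Z$. Then $$\zeta_N(s)=\prod_{\alpha}\Big(\frac1{s-\alpha}\Big)^{m(\alpha)},\qquad \zeta_{N^*}(s)=\prod_{\alpha}\Big(\frac1{s+\alpha}\Big)^{m(\alpha)},$$ so that $\varepsilon_N(s)=(-1)^{N(1)}$. If $N\neq0$ satisfies $N(1/u)=cu^{-\omega}N(u)$ for some $c,\omega\in\mathbb C$, then $c=\pm1$ and $$\zeta_N(\omega-s)=(-1)^{N(1)}\zeta_N(s)^{c}.$$
   Context: For measurable $N:(1,\infty)\to\mathbb C$ let $Z_N(w,s)=\frac1{\Gamma(w)}\int_1^\infty\frac{N(u)}{u^{s+1}}(\log u)^{w-1}du$ (convergent for $\operatorname{Re}(s)$ large and $w$ in an open domain, extended holomorphically to $w=0$), and $\zeta_N(s)=\exp\big(\frac{\partial}{\partial w}Z_N(w,s)\big|_{w=0}\big)$, continued meromorphically in $s$. For $N$ defined on $(0,\infty)$, $N^*(u)=N(1/u)$, and $\varepsilon_N(s)=\zeta_{N^*}(-s)/\zeta_N(s)$. *)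

theory Defs
  imports "HOL-Complex_Analysis.Complex_Analysis"
begin

definition Z_integrand :: "(real \<Rightarrow> complex) \<Rightarrow> complex \<Rightarrow> complex \<Rightarrow> real \<Rightarrow> complex" where
  "Z_integrand N w s u = N u / (of_real u powr (s + 1)) * (of_real (ln u)) powr (w - 1)"

definition Z_int :: "(real \<Rightarrow> complex) \<Rightarrow> complex \<Rightarrow> complex \<Rightarrow> complex" where
  "Z_int N w s = rGamma w * integral {1<..} (Z_integrand N w s)"

text \<open>g is a holomorphic extension (in w, for fixed s) to a connected open domain containing 0
  of Z_N(.,s), where the latter is given by the (absolutely) convergent integral on a
  nonempty open set of w.\<close>
definition is_Z_ext :: "(real \<Rightarrow> complex) \<Rightarrow> complex \<Rightarrow> (complex \<Rightarrow> complex) \<Rightarrow> bool" where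
  "is_Z_ext N s g \<longleftrightarrow> (\<exists>D U. open D \<and> connected D \<and> 0 \<in> D \<and> open U \<and> U \<noteq> {} \<and> U \<subseteq> D \<and>
      g holomorphic_on D \<and>
      (\<forall>w\<in>U. Z_integrand N w s absolutely_integrable_on {1<..} \<and> g w = Z_int N w s))"

definition zeta_val :: "(real \<Rightarrow> complex) \<Rightarrow> complex \<Rightarrow> complex" where
  "zeta_val N s = exp (deriv (SOME g. is_Z_ext N s g) 0)"

text \<open>f is the meromorphic continuation (in normal form) to all of C of zeta_val N,
  originally defined on a right half plane.\<close>
definition is_zeta_cont :: "(real \<Rightarrow> complex) \<Rightarrow> (complex \<Rightarrow> complex) \<Rightarrow> bool" where
  "is_zeta_cont N f \<longleftrightarrow> f nicely_meromorphic_on UNIV \<and>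
     (\<exists>\<sigma>::real. \<forall>s. Re s > \<sigma> \<longrightarrow> (\<exists>g. is_Z_ext N s g) \<and> f s = zeta_val N s)"

definition zeta :: "(real \<Rightarrow> complex) \<Rightarrow> complex \<Rightarrow> complex" where
  "zeta N = (SOME f. is_zeta_cont N f)"

definition dual :: "(real \<Rightarrow> complex) \<Rightarrow> real \<Rightarrow> complex" where
  "dual N u = N (1 / u)"

definition epsilon :: "(real \<Rightarrow> complex) \<Rightarrow> complex \<Rightarrow> complex" where
  "epsilon N s = zeta (dual N) (- s) / zeta N s"

definition powsum :: "(complex \<Rightarrow> int) \<Rightarrow> real \<Rightarrow> complex" where
  "powsum m u = (\<Sum>a\<in>{a. m a \<noteq> 0}. of_int (m a) * of_real u powr a)"

end

theory Submission
  imports Defs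
begin


lemma holo_param_integral:
  fixes F F' :: "complex \<Rightarrow> real \<Rightarrow> complex"
  assumes S: "open S"
  assumes contF: "\<And>z. z \<in> S \<Longrightarrow> continuous_on {0<..} (F z)"
  assumes der: "\<And>z t. z \<in> S \<Longrightarrow> t > 0 \<Longrightarrow> ((\<lambda>z. F z t) has_field_derivative F' z t) (at z)"
  assumes contF': "continuous_on (S \<times> {0<..}) (\<lambda>(z,t). F' z t)"
  assumes dom: "\<And>K. compact K \<Longrightarrow> K \<subseteq> S \<Longrightarrow> \<exists>g. g integrable_on {0<..} \<and> (\<forall>z\<in>K. \<forall>t>0. norm (F z t) \<le> g t)"
  shows "(\<lambda>z. integral {0<..} (F z)) holomorphic_on S"
proof -
  have absint: "F z absolutely_integrable_on {0<..}" if "z \<in> S" for z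
  proof -
    have "\<exists>g. g integrable_on {0<..} \<and> (\<forall>t>0. norm (F z t) \<le> g t)"
      using dom[of "{z}"] that by auto
    then obtain g where g: "g integrable_on {0<..}" "\<forall>t>0. norm (F z t) \<le> g t"
      by blast
    show ?thesis
      by (rule measurable_bounded_by_integrable_imp_absolutely_integrable[OF _ _ g(1)])
         (use g(2) contF[OF that] in \<open>auto intro: continuous_imp_measurable_on_sets_lebesgue\<close>)
  qed
  have intg: "F z integrable_on {0<..}" if "z \<in> S" for z
    using absint[OF that] set_lebesgue_integral_eq_integral(1) by blast
  have "(\<lambda>z. integral {0<..} (F z)) analytic_on S"
    unfolding analytic_on_def
  proof
    fix z0 assume z0: "z0 \<in> S"
    obtain r where r: "r > 0" "cball z0 r \<subseteq> S"
      using S z0 open_contains_cball by blast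
    have "\<exists>g. g integrable_on {0<..} \<and> (\<forall>z\<in>cball z0 r. \<forall>t>0. norm (F z t) \<le> g t)"
      using dom[of "cball z0 r"] r by auto
    then obtain g where g: "g integrable_on {0<..}" "\<And>z t. z \<in> cball z0 r \<Longrightarrow> t > 0 \<Longrightarrow> norm (F z t) \<le> g t"
      by blast
    have g0: "g t \<ge> 0" if "t > 0" for t
      using g(2)[of z0 t] that r(1) norm_ge_zero[of "F z0 t"] by (smt (verit) centre_in_cball)
    define a :: "nat \<Rightarrow> real" where "a n = 1 / Suc n" for n
    define b :: "nat \<Rightarrow> real" where "b n = Suc n" for n
    have a0: "a n > 0" for n by (simp add: a_def)
    have ab: "{a n..b n} \<subseteq> {0<..}" for n using a0[of n] by auto
    define fn where "fn n z = integral (cbox (a n) (b n)) (F z)" for n z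
    define e where "e n = integral {0<..} (\<lambda>t. if t \<in> {a n..b n} then 0 else g t)" for n
    have gint_ab: "g integrable_on {a n..b n}" for n
      using integrable_on_subinterval[OF g(1)] ab by (metis cbox_interval)
    have gtail_int: "(\<lambda>t. if t \<in> {a n..b n} then 0 else g t) integrable_on {0<..}" for n
    proof -
      have "(\<lambda>t. if t \<in> {a n..b n} then g t else 0) integrable_on {0<..}"
        using gint_ab[of n] ab[of n] by (subst integrable_restrict_Int) (simp add: Int_absorb1 Int_absorb2 Int_commute)
      from integrable_diff[OF g(1) this] show ?thesis
        by (rule integrable_eq) auto
    qed
    have e_lim: "e \<longlonglongrightarrow> 0"
    proof -
      have "(\<lambda>k. integral {0<..} (\<lambda>t. if t \<in> {a k..b k} then 0 else g t)) \<longlonglongrightarrow> integral {0<..} (\<lambda>t::real. 0::real)"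
      proof (rule dominated_convergence(2)[where f="\<lambda>k t. if t \<in> {a k..b k} then 0 else g t" and g="\<lambda>t. 0", OF gtail_int g(1)])
        fix k and t :: real assume "t \<in> {0<..}"
        thus "norm (if t \<in> {a k..b k} then 0 else g t) \<le> g t" using g0 by auto
      next
        fix t :: real assume t: "t \<in> {0<..}"
        have "eventually (\<lambda>k. t \<in> {a k..b k}) sequentially"
        proof -
          obtain N1 :: nat where N1: "1 / t < N1" using reals_Archimedean2 by blast
          obtain N2 :: nat where N2: "t < N2" using reals_Archimedean2 by blast
          show ?thesis unfolding eventually_sequentially
          proof (intro exI[of _ "N1 + N2"] allI impI)
            fix k assume k: "N1 + N2 \<le> k"
            have "1 / t < Suc k" using N1 k by linarith
            hence "a k \<le> t" using t by (simp add: a_def field_simps)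
            moreover have "t \<le> b k" using N2 k by (simp add: b_def)
            ultimately show "t \<in> {a k..b k}" by simp
          qed
        qed
        thus "(\<lambda>k. if t \<in> {a k..b k} then 0 else g t) \<longlonglongrightarrow> 0"
          by (rule tendsto_eventually[OF eventually_mono]) auto
      qed
      moreover have "e = (\<lambda>k. integral {0<..} (\<lambda>t. if t \<in> {a k..b k} then 0 else g t))"
        by (simp add: e_def fun_eq_iff)
      ultimately show ?thesis by simp
    qed
    have bound: "norm (integral {0<..} (F z) - fn n z) \<le> e n" if z: "z \<in> cball z0 r" for z n
    proof -
      have zS: "z \<in> S" using z r by auto
      have Fab: "F z integrable_on {a n..b n}"
        using integrable_on_subinterval[OF intg[OF zS]] ab by (metis cbox_interval)
      have r1: "(\<lambda>t. if t \<in> {a n..b n} then F z t else 0) integrable_on {0<..}"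
        using Fab ab[of n] by (subst integrable_restrict_Int) (simp add: Int_absorb1 Int_absorb2 Int_commute)
      have i1: "integral {0<..} (\<lambda>t. if t \<in> {a n..b n} then F z t else 0) = fn n z"
      proof -
        have "{0<..} \<inter> {a n..b n} = cbox (a n) (b n)" "{a n..b n} \<inter> {0<..} = cbox (a n) (b n)" using ab[of n] by auto
        thus ?thesis using integral_restrict_Int[of "{0<..}" "{a n..b n}" "F z"] by (simp add: fn_def)
      qed
      have tint: "(\<lambda>t. if t \<in> {a n..b n} then 0 else F z t) integrable_on {0<..}"
        using integrable_diff[OF intg[OF zS] r1] by (rule integrable_eq) auto
      have "integral {0<..} (F z) = integral {0<..} (\<lambda>t. (if t \<in> {a n..b n} then F z t else 0) + (if t \<in> {a n..b n} then 0 else F z t))"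
        by (rule integral_cong) auto
      also have "\<dots> = fn n z + integral {0<..} (\<lambda>t. if t \<in> {a n..b n} then 0 else F z t)"
        by (simp only: integral_add[OF r1 tint] i1)
      finally have eq: "integral {0<..} (F z) - fn n z = integral {0<..} (\<lambda>t. if t \<in> {a n..b n} then 0 else F z t)"
        by simp
      show ?thesis unfolding eq e_def
        by (rule integral_norm_bound_integral[OF tint gtail_int[of n]]) (use g(2)[OF z] in auto)
    qed
    have ulim: "uniform_limit (cball z0 r) fn (\<lambda>z. integral {0<..} (F z)) sequentially"
    proof (rule uniform_limitI)
      fix \<epsilon> :: real assume "\<epsilon> > 0"
      with e_lim have "eventually (\<lambda>n. e n < \<epsilon>) sequentially"
        by (metis order_tendstoD(2))
      thus "eventually (\<lambda>n. \<forall>z\<in>cball z0 r. dist (fn n z) (integral {0<..} (F z)) < \<epsilon>) sequentially"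
      proof eventually_elim
        case (elim n)
        show ?case
        proof
          fix z assume "z \<in> cball z0 r"
          from bound[OF this, of n] elim show "dist (fn n z) (integral {0<..} (F z)) < \<epsilon>"
            by (simp add: dist_norm norm_minus_commute)
        qed
      qed
    qed
    have hol_n: "fn n holomorphic_on cball z0 r" for n
      unfolding fn_def
    proof (rule leibniz_rule_holomorphic[where fx = F'])
      fix x t assume x: "x \<in> cball z0 r" and t: "t \<in> cbox (a n) (b n)"
      have "t > 0" using t ab[of n] by auto
      show "((\<lambda>x. F x t) has_field_derivative F' x t) (at x within cball z0 r)"
      proof -
        have "x \<in> S" using x r by auto
        from der[OF this \<open>t > 0\<close>] show ?thesis by (rule has_field_derivative_at_within)
      qed
    next
      fix x assume x: "x \<in> cball z0 r"
      show "F x integrable_on cbox (a n) (b n)"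
      proof -
        have "x \<in> S" using x r by auto
        have "continuous_on (cbox (a n) (b n)) (F x)"
          by (rule continuous_on_subset[OF contF[OF \<open>x \<in> S\<close>]]) (use ab[of n] in auto)
        thus ?thesis by (rule integrable_continuous)
      qed
    next
      show "continuous_on (cball z0 r \<times> cbox (a n) (b n)) (\<lambda>(x, t). F' x t)"
        by (rule continuous_on_subset[OF contF']) (use r ab[of n] in auto)
    qed (rule convex_cball)
    have ev: "eventually (\<lambda>n. continuous_on (cball z0 r) (fn n) \<and> fn n holomorphic_on ball z0 r) sequentially"
    proof (rule always_eventually, rule allI)
      fix n
      show "continuous_on (cball z0 r) (fn n) \<and> fn n holomorphic_on ball z0 r"
        using holomorphic_on_imp_continuous_on[OF hol_n[of n]] holomorphic_on_subset[OF hol_n[of n] ball_subset_cball] by (rule conjI)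
    qed
    obtain "continuous_on (cball z0 r) (\<lambda>z. integral {0<..} (F z))"
           "(\<lambda>z. integral {0<..} (F z)) holomorphic_on ball z0 r"
      by (rule holomorphic_uniform_limit[OF ev ulim]) simp
    thus "\<exists>e>0. (\<lambda>z. integral {0<..} (F z)) holomorphic_on ball z0 e"
      using r by auto
  qed
  thus ?thesis by (rule analytic_imp_holomorphic)
qed



definition E :: "complex \<Rightarrow> complex \<Rightarrow> real \<Rightarrow> complex" where
  "E w l t = exp ((w - 1) * of_real (ln t) - l * of_real t)"

lemma norm_E: "t > 0 \<Longrightarrow> norm (E w l t) = t powr (Re w - 1) * exp (- (Re l * t))"
proof -
  assume t: "t > 0"
  have "norm (E w l t) = exp ((Re w - 1) * ln t - Re l * t)" by (simp add: E_def norm_exp_eq_Re)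
  also have "\<dots> = t powr (Re w - 1) * exp (- (Re l * t))"
    using t by (simp add: powr_def exp_diff exp_minus divide_inverse)
  finally show ?thesis .
qed

lemma absint_dom:
  fixes f :: "real \<Rightarrow> complex"
  assumes "continuous_on {0<..} f" "g integrable_on {0<..}" "\<And>t. t > 0 \<Longrightarrow> norm (f t) \<le> g t"
  shows "f absolutely_integrable_on {0<..}"
  by (rule measurable_bounded_by_integrable_imp_absolutely_integrable[OF _ _ assms(2)])
     (use assms in \<open>auto intro: continuous_imp_measurable_on_sets_lebesgue\<close>)

lemma gamma_bound_int:
  fixes x a :: real
  assumes "x > 0" "a > 0"
  shows "(\<lambda>t. t powr (x - 1) * exp (- (a * t))) integrable_on {0<..}"
proof -
  have "(\<lambda>t. complex_of_real t powr (of_real x - 1) / of_real (exp (a * t))) absolutely_integrable_on {0<..}"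
    using absolutely_integrable_Gamma_integral[of "of_real x" a] assms by simp
  hence "(\<lambda>t. norm (complex_of_real t powr (of_real x - 1) / of_real (exp (a * t)))) integrable_on {0<..}"
    by (simp add: absolutely_integrable_on_def)
  thus ?thesis
  proof (rule integrable_spike[where S="{}"], simp_all)
    fix t :: real assume "0 < t"
    thus "t powr (x - 1) * exp (- (a * t)) = norm (complex_of_real t powr (of_real x - 1) / of_real (exp (a * t)))"
      by (simp add: norm_divide norm_powr_real_powr exp_minus field_simps)
  qed
qed

lemma cont_E: "continuous_on {0<..} (E w l)"
  unfolding E_def by (intro continuous_intros) auto

lemma E_absint:
  assumes "Re w > 0" "Re l > 0"
  shows "E w l absolutely_integrable_on {0<..}"
proof (rule absint_dom[OF cont_E gamma_bound_int[OF assms]])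
  fix t :: real assume "t > 0"
  thus "norm (E w l t) \<le> t powr (Re w - 1) * exp (- (Re l * t))" by (simp add: norm_E)
qed

lemma gamma_real:
  assumes w: "Re w > 0" and c: "c > 0"
  shows "integral {0<..} (E w (of_real c)) = Gamma w * exp (- w * of_real (ln c))"
proof -
  define f where "f t = complex_of_real t powr (w - 1) / of_real (exp t)" for t
  have fabs: "f absolutely_integrable_on {0<..}"
    unfolding f_def using absolutely_integrable_Gamma_integral[of w 1] w by simp
  have "(f has_integral Gamma w) {0..}"
    unfolding f_def using Gamma_integral_complex[OF w] by simp
  hence "(f has_integral Gamma w) {0<..}"
    by (subst (asm) has_integral_spike_set_eq) (auto intro: negligible_subset[of "{0}"])
  hence fint: "integral {0<..} f = Gamma w" by blast
  have img: "(\<lambda>x. c * x) ` {0<..} = {0<..}"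
  proof safe
    fix y :: real assume "y > 0"
    thus "y \<in> (\<lambda>x. c * x) ` {0<..}" using c by (intro image_eqI[of _ _ "y / c"]) auto
  qed (use c in auto)
  have der: "((\<lambda>x. c * x) has_field_derivative c) (at x within {0<..})" for x
    by (auto intro!: derivative_eq_intros)
  have inj: "inj_on (\<lambda>x. c * x) {0<..}" using c by (auto simp: inj_on_def)
  have "(\<lambda>x. \<bar>c\<bar> *\<^sub>R f (c * x)) absolutely_integrable_on {0<..} \<and>
        integral {0<..} (\<lambda>x. \<bar>c\<bar> *\<^sub>R f (c * x)) = Gamma w"
    using has_absolute_integral_change_of_variables_real[of "{0<..}" "\<lambda>x. c * x" "\<lambda>_. c" f "Gamma w", OF _ der inj]
    fabs fint img by simp
  hence I: "integral {0<..} (\<lambda>x. \<bar>c\<bar> *\<^sub>R f (c * x)) = Gamma w" by blast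
  have eq: "E w (of_real c) x = exp (- w * of_real (ln c)) * (\<bar>c\<bar> *\<^sub>R f (c * x))" if "x > 0" for x
  proof -
    have "\<bar>c\<bar> *\<^sub>R f (c * x) = of_real c * exp ((w - 1) * of_real (ln (c * x))) / exp (of_real (c * x))"
    proof -
      have "Ln (of_real c * of_real x) = of_real (ln (c*x))"
        by (metis Ln_of_real mult_pos_pos of_real_mult that c)
      moreover have "complex_of_real (exp (c * x)) = exp (of_real c * of_real x)"
        by (metis exp_of_real of_real_mult)
      ultimately show ?thesis
        using that c by (simp add: f_def powr_def scaleR_conv_of_real)
    qed
    also have "ln (c * x) = ln c + ln x" using that c by (simp add: ln_mult)
    finally have "\<bar>c\<bar> *\<^sub>R f (c * x) = of_real c * exp ((w - 1) * of_real (ln c + ln x)) / exp (of_real (c * x))" .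
    moreover have "of_real c = exp (of_real (ln c) :: complex)" using c by (simp add: exp_of_real)
    ultimately have "\<bar>c\<bar> *\<^sub>R f (c * x) = exp (w * of_real (ln c) + ((w - 1) * of_real (ln x) - of_real c * of_real x))"
      by (simp add: exp_add exp_diff algebra_simps)
    hence "exp (- w * of_real (ln c)) * (\<bar>c\<bar> *\<^sub>R f (c * x)) =
       exp (- w * of_real (ln c) + (w * of_real (ln c) + ((w - 1) * of_real (ln x) - of_real c * of_real x)))"
      by (simp only: mult_exp_exp)
    thus ?thesis
      by (simp add: E_def algebra_simps)
  qed
  have "integral {0<..} (E w (of_real c)) = integral {0<..} (\<lambda>x. exp (- w * of_real (ln c)) * (\<bar>c\<bar> *\<^sub>R f (c * x)))"
    by (rule integral_cong) (use eq in auto)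
  also have "\<dots> = exp (- w * of_real (ln c)) * Gamma w"
    by (simp only: integral_mult_right I)
  finally show ?thesis by simp
qed



lemma compact_Re_min:
  assumes "compact K" "K \<subseteq> {l. Re l > 0}"
  shows "\<exists>\<delta>>0. \<forall>l\<in>K. Re l \<ge> \<delta>"
proof (cases "K = {}")
  case True thus ?thesis by (intro exI[of _ 1]) auto
next
  case False
  have "compact (Re ` K)" by (intro compact_continuous_image continuous_intros assms(1))
  then obtain x where x: "x \<in> Re ` K" "\<forall>y\<in>Re ` K. x \<le> y"
    using compact_attains_inf[of "Re ` K"] False by auto
  thus ?thesis using assms(2) by (intro exI[of _ x]) auto
qed

lemma gamma_complex:
  assumes w: "Re w > 0" and l: "Re l > 0"
  shows "integral {0<..} (E w l) = Gamma w * exp (- w * Ln l)"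
proof -
  define S where "S = {l::complex. Re l > 0}"
  have oS: "open S" unfolding S_def by (rule open_halfspace_Re_gt)
  have cS: "connected S" unfolding S_def by (rule connected_halfspace_Re_gt)
  have hol1: "(\<lambda>l. integral {0<..} (E w l)) holomorphic_on S"
  proof (rule holo_param_integral[where F' = "\<lambda>l t. - of_real t * E w l t"])
    show "open S" by (rule oS)
  next
    fix l assume "l \<in> S" show "continuous_on {0<..} (E w l)" by (rule cont_E)
  next
    fix l and t :: real assume "l \<in> S" "t > 0"
    show "((\<lambda>l. E w l t) has_field_derivative - of_real t * E w l t) (at l)"
      unfolding E_def by (auto intro!: derivative_eq_intros)
  next
    show "continuous_on (S \<times> {0<..}) (\<lambda>(l, t). - of_real t * E w l t)"
      unfolding case_prod_unfold E_def by (intro continuous_intros) auto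
  next
    fix K assume K: "compact K" "K \<subseteq> S"
    then obtain \<delta> where \<delta>: "\<delta> > 0" "\<forall>l\<in>K. Re l \<ge> \<delta>"
      using compact_Re_min[of K] unfolding S_def by auto
    show "\<exists>g. g integrable_on {0<..} \<and> (\<forall>z\<in>K. \<forall>t>0. norm (E w z t) \<le> g t)"
    proof (intro exI[of _ "\<lambda>t. t powr (Re w - 1) * exp (- (\<delta> * t))"] conjI ballI allI impI)
      show "(\<lambda>t. t powr (Re w - 1) * exp (- (\<delta> * t))) integrable_on {0<..}"
        by (rule gamma_bound_int) (use w \<delta> in auto)
    next
      fix z and t :: real assume z: "z \<in> K" and t: "t > 0"
      have "\<delta> * t \<le> Re z * t" using \<delta> z t by (intro mult_right_mono) auto
      hence "exp (- (Re z * t)) \<le> exp (- (\<delta> * t))" by simp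
      thus "norm (E w z t) \<le> t powr (Re w - 1) * exp (- (\<delta> * t))"
        using t by (simp add: norm_E mult_left_mono)
    qed
  qed
  have hol2: "(\<lambda>l. Gamma w * exp (- w * Ln l)) holomorphic_on S"
    unfolding S_def by (intro holomorphic_intros) (auto simp: nonpos_Reals_def complex_nonpos_Reals_iff)
  have "(\<lambda>l. integral {0<..} (E w l) - Gamma w * exp (- w * Ln l)) l = 0"
  proof (rule analytic_continuation[where U = "of_real ` {0<..}" and \<xi> = 1 and S = S and f = "\<lambda>l. integral {0<..} (E w l) - Gamma w * exp (- w * Ln l)"])
    show "(\<lambda>l. integral {0<..} (E w l) - Gamma w * exp (- w * Ln l)) holomorphic_on S"
      by (intro holomorphic_intros hol1 hol2)
  next
    show "of_real ` {0<..} \<subseteq> S" by (auto simp: S_def)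
  next
    show "(1::complex) \<in> S" by (simp add: S_def)
  next
    show "(1::complex) islimpt of_real ` {0<..}"
      unfolding islimpt_approachable
    proof (intro allI impI)
      fix e :: real assume e: "e > 0"
      show "\<exists>x'\<in>complex_of_real ` {0<..}. x' \<noteq> 1 \<and> dist x' 1 < e"
      proof (intro bexI[of _ "of_real (1 + e/2)"] conjI)
        show "complex_of_real (1 + e / 2) \<in> complex_of_real ` {0<..}" using e by (intro imageI) auto
      qed (use e in \<open>auto simp: dist_norm\<close>)
    qed
  next
    fix z assume "z \<in> complex_of_real ` {0<..}"
    then obtain c where c: "c > 0" "z = of_real c" by auto
    show "integral {0<..} (E w z) - Gamma w * exp (- w * Ln z) = 0"
      using gamma_real[OF w c(1)] c by (simp add: Ln_of_real)
  qed (use oS cS l in \<open>auto simp: S_def\<close>)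
  thus ?thesis by simp
qed



definition Hf :: "complex set \<Rightarrow> (complex \<Rightarrow> complex) \<Rightarrow> (complex \<Rightarrow> complex) \<Rightarrow> real \<Rightarrow> complex" where
  "Hf A c l t = (\<Sum>a\<in>A. c a * exp (- l a * of_real t))"

definition FW :: "complex set \<Rightarrow> (complex \<Rightarrow> complex) \<Rightarrow> (complex \<Rightarrow> complex) \<Rightarrow> complex \<Rightarrow> real \<Rightarrow> complex" where
  "FW A c l w t = Hf A c l t * exp ((w - 1) * of_real (ln t))"

lemma FW_sum: "FW A c l w t = (\<Sum>a\<in>A. c a * E w (l a) t)"
  unfolding FW_def Hf_def E_def sum_distrib_right
proof (intro sum.cong refl)
  fix a assume "a \<in> A"
  have "exp (- l a * of_real t) * exp ((w - 1) * of_real (ln t)) = exp (- l a * of_real t + (w - 1) * of_real (ln t))"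
    by (simp only: mult_exp_exp)
  thus "c a * exp (- l a * of_real t) * exp ((w - 1) * of_real (ln t)) = c a * exp ((w - 1) * of_real (ln t) - l a * of_real t)"
    by (simp add: algebra_simps)
qed

lemma Hf_bound:
  assumes "\<forall>a\<in>A. Re (l a) \<ge> 1" "t > 0"
  shows "norm (Hf A c l t) \<le> (\<Sum>a\<in>A. norm (c a)) * exp (- t)"
proof -
  have "norm (Hf A c l t) \<le> (\<Sum>a\<in>A. norm (c a * exp (- l a * of_real t)))"
    unfolding Hf_def by (rule norm_sum)
  also have "\<dots> \<le> (\<Sum>a\<in>A. norm (c a) * exp (- t))"
  proof (rule sum_mono)
    fix a assume a: "a \<in> A"
    have "norm (exp (- l a * of_real t)) = exp (- (Re (l a) * t))" by (simp add: norm_exp_eq_Re)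
    also have "\<dots> \<le> exp (- t)" using assms a by (simp add: mult_right_mono_neg)
    finally show "norm (c a * exp (- l a * of_real t)) \<le> norm (c a) * exp (- t)"
      by (simp add: norm_mult mult_left_mono)
  qed
  also have "\<dots> = (\<Sum>a\<in>A. norm (c a)) * exp (- t)" by (simp add: sum_distrib_right)
  finally show ?thesis .
qed

lemma norm_FW: "t > 0 \<Longrightarrow> norm (FW A c l w t) = norm (Hf A c l t) * t powr (Re w - 1)"
  by (simp add: FW_def norm_mult norm_exp_eq_Re powr_def)

lemma powr_sandwich:
  fixes t x y z :: real
  assumes "t > 0" "y \<le> x" "x \<le> z"
  shows "t powr x \<le> t powr y + t powr z"
proof (cases "t \<le> 1")
  case True
  hence "t powr x \<le> t powr y" using assms by (intro powr_mono') auto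
  thus ?thesis by (smt (verit) powr_ge_zero)
next
  case False
  hence "t powr x \<le> t powr z" using assms by (intro powr_mono) auto
  thus ?thesis by (smt (verit) powr_ge_zero)
qed

lemma cont_FW: "continuous_on {0<..} (FW A c l w)"
  unfolding FW_def Hf_def by (intro continuous_intros) auto

lemma FW_integral_pos:
  assumes fin: "finite A" and l: "\<forall>a\<in>A. Re (l a) \<ge> 1" and w: "Re w > 0"
  shows "FW A c l w absolutely_integrable_on {0<..}"
        "integral {0<..} (FW A c l w) = Gamma w * (\<Sum>a\<in>A. c a * exp (- w * Ln (l a)))"
proof -
  have ai: "(\<lambda>t. c a * E w (l a) t) absolutely_integrable_on {0<..}" if "a \<in> A" for a
    using E_absint[OF w, of "l a"] l that by (intro set_integrable_mult_right) auto
  have "(\<lambda>t. \<Sum>a\<in>A. c a * E w (l a) t) absolutely_integrable_on {0<..}"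
    by (rule absolutely_integrable_sum[OF fin ai])
  thus "FW A c l w absolutely_integrable_on {0<..}" by (simp add: FW_sum[abs_def])
  have "integral {0<..} (FW A c l w) = integral {0<..} (\<lambda>t. \<Sum>a\<in>A. c a * E w (l a) t)"
    by (simp add: FW_sum[abs_def])
  also have "\<dots> = (\<Sum>a\<in>A. integral {0<..} (\<lambda>t. c a * E w (l a) t))"
    by (rule integral_sum[OF fin]) (use ai set_lebesgue_integral_eq_integral(1) in blast)
  also have "\<dots> = (\<Sum>a\<in>A. c a * (Gamma w * exp (- w * Ln (l a))))"
  proof (rule sum.cong[OF refl])
    fix a assume "a \<in> A"
    hence "Re (l a) > 0" using l by force
    thus "integral {0<..} (\<lambda>t. c a * E w (l a) t) = c a * (Gamma w * exp (- w * Ln (l a)))"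
      using gamma_complex[OF w] by simp
  qed
  also have "\<dots> = Gamma w * (\<Sum>a\<in>A. c a * exp (- w * Ln (l a)))"
    by (simp add: sum_distrib_left algebra_simps)
  finally show "integral {0<..} (FW A c l w) = Gamma w * (\<Sum>a\<in>A. c a * exp (- w * Ln (l a)))" .
qed

lemma continuation:
  assumes fin: "finite A" and l: "\<forall>a\<in>A. Re (l a) \<ge> 1"
    and r: "r > 0" and intball: "\<forall>w\<in>ball w0 r. FW A c l w absolutely_integrable_on {0<..}"
  shows "rGamma w0 * integral {0<..} (FW A c l w0) = (\<Sum>a\<in>A. c a * exp (- w0 * Ln (l a)))"
proof -
  define w1 where "w1 = w0 - of_real (r/2)"
  have "w1 \<in> ball w0 r" using r by (simp add: w1_def dist_norm)
  hence int1: "FW A c l w1 absolutely_integrable_on {0<..}" using intball by blast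
  define V where "V = {w. Re w > Re w1}"
  have w0V: "w0 \<in> V" using r by (simp add: V_def w1_def)
  define C where "C = (\<Sum>a\<in>A. norm (c a))"
  have C0: "C \<ge> 0" unfolding C_def by (rule sum_nonneg) auto
  have hol1: "(\<lambda>w. integral {0<..} (FW A c l w)) holomorphic_on V"
  proof (rule holo_param_integral[where F' = "\<lambda>w t. FW A c l w t * of_real (ln t)"])
    show "open V" unfolding V_def by (rule open_halfspace_Re_gt)
  next
    fix w assume "w \<in> V" show "continuous_on {0<..} (FW A c l w)" by (rule cont_FW)
  next
    fix w and t :: real assume "w \<in> V" "t > 0"
    show "((\<lambda>w. FW A c l w t) has_field_derivative FW A c l w t * of_real (ln t)) (at w)"
      unfolding FW_def by (auto intro!: derivative_eq_intros)
  next
    show "continuous_on (V \<times> {0<..}) (\<lambda>(w, t). FW A c l w t * of_real (ln t))"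
      unfolding case_prod_unfold FW_def Hf_def by (intro continuous_intros) auto
  next
    fix K assume K: "compact K" "K \<subseteq> V"
    obtain B where B: "\<forall>x\<in>K. norm x \<le> B"
      using compact_imp_bounded[OF K(1)] unfolding bounded_iff by blast
    define M where "M = max B 1"
    have M1: "M \<ge> 1" by (simp add: M_def)
    show "\<exists>g. g integrable_on {0<..} \<and> (\<forall>z\<in>K. \<forall>t>0. norm (FW A c l z t) \<le> g t)"
    proof (intro exI[of _ "\<lambda>t. norm (FW A c l w1 t) + C * (t powr (M - 1) * exp (- (1 * t)))"] conjI ballI allI impI)
      have "(\<lambda>t. norm (FW A c l w1 t)) integrable_on {0<..}"
        using int1 by (simp add: absolutely_integrable_on_def)
      moreover have "(\<lambda>t. C * (t powr (M - 1) * exp (- (1 * t)))) integrable_on {0<..}"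
        using integrable_cmul[OF gamma_bound_int[of M 1], of C] M1 by simp
      ultimately show "(\<lambda>t. norm (FW A c l w1 t) + C * (t powr (M - 1) * exp (- (1 * t)))) integrable_on {0<..}"
        by (rule integrable_add)
    next
      fix z and t :: real assume z: "z \<in> K" and t: "t > 0"
      have zlow: "Re w1 \<le> Re z" using z K(2) by (auto simp: V_def)
      have zup: "Re z \<le> M" using B z complex_Re_le_cmod[of z] by (simp add: M_def) (smt (verit))
      have "norm (FW A c l z t) = norm (Hf A c l t) * t powr (Re z - 1)" by (rule norm_FW[OF t])
      also have "\<dots> \<le> norm (Hf A c l t) * (t powr (Re w1 - 1) + t powr (M - 1))"
        by (intro mult_left_mono powr_sandwich) (use t zlow zup in auto)
      also have "\<dots> = norm (FW A c l w1 t) + norm (Hf A c l t) * t powr (M - 1)"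
        by (simp add: norm_FW[OF t] algebra_simps)
      also have "norm (Hf A c l t) * t powr (M - 1) \<le> (C * exp (- t)) * t powr (M - 1)"
        by (intro mult_right_mono) (use Hf_bound[OF l t, of c] in \<open>auto simp: C_def\<close>)
      finally show "norm (FW A c l z t) \<le> norm (FW A c l w1 t) + C * (t powr (M - 1) * exp (- (1 * t)))"
        by (simp add: algebra_simps)
    qed
  qed
  define V' where "V' = {w. Re w > max (Re w1) 0}"
  have eqV': "rGamma w * integral {0<..} (FW A c l w) = (\<Sum>a\<in>A. c a * exp (- w * Ln (l a)))"
    if "w \<in> V'" for w
  proof -
    have w: "Re w > 0" using that by (simp add: V'_def)
    have "Gamma w \<noteq> 0" using w by (auto simp: Gamma_eq_zero_iff elim!: nonpos_Ints_cases)
    thus ?thesis using FW_integral_pos(2)[OF fin l w, of c]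
      by (simp add: rGamma_inverse_Gamma)
  qed
  show ?thesis
  proof (rule analytic_continuation_open[where s = V' and s' = V and z = w0 and
        f = "\<lambda>w. rGamma w * integral {0<..} (FW A c l w)" and g = "\<lambda>w. \<Sum>a\<in>A. c a * exp (- w * Ln (l a))"])
    show "open V'" unfolding V'_def by (rule open_halfspace_Re_gt)
    show "open V" unfolding V_def by (rule open_halfspace_Re_gt)
    show "V' \<noteq> {}" unfolding V'_def by (intro ex_in_conv[THEN iffD1] exI[of _ "of_real (max (Re w1) 0 + 1)"]) auto
    show "connected V" unfolding V_def by (rule connected_halfspace_Re_gt)
    show "V' \<subseteq> V" by (auto simp: V'_def V_def)
    show "(\<lambda>w. rGamma w * integral {0<..} (FW A c l w)) holomorphic_on V"
      by (intro holomorphic_intros hol1)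
    show "(\<lambda>w. \<Sum>a\<in>A. c a * exp (- w * Ln (l a))) holomorphic_on V"
      by (intro holomorphic_intros)
  qed (use eqV' w0V in auto)
qed



lemma exp_image_pos: "exp ` {0<..} = ({1<..} :: real set)"
proof safe
  fix y :: real assume "y > 1"
  thus "y \<in> exp ` {0<..}" by (intro image_eqI[of _ _ "ln y"]) auto
qed auto

lemma Z_integrand_exp:
  assumes fin: "finite {a. m a \<noteq> 0}" and t: "t > 0"
  shows "exp t * Z_integrand (powsum m) w s (exp t)
         = FW {a. m a \<noteq> 0} (\<lambda>a. of_int (m a)) (\<lambda>a. s - a) w t"
proof -
  let ?A = "{a. m a \<noteq> 0}"
  have L: "Ln (complex_of_real (exp t)) = of_real t" by (simp add: Ln_of_real)
  have p1: "complex_of_real (exp t) powr (s + 1) = exp ((s + 1) * of_real t)"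
    by (simp add: powr_def L)
  have p2: "complex_of_real (ln (exp t)) powr (w - 1) = exp ((w - 1) * of_real (ln t))"
    using t by (simp add: powr_def Ln_of_real)
  have p3: "powsum m (exp t) = (\<Sum>a\<in>?A. of_int (m a) * exp (a * of_real t))"
    unfolding powsum_def by (intro sum.cong refl) (simp add: powr_def L mult.commute)
  have "exp t * Z_integrand (powsum m) w s (exp t)
      = (\<Sum>a\<in>?A. of_int (m a) * exp (a * of_real t)) * exp (of_real t) / exp ((s + 1) * of_real t) * exp ((w - 1) * of_real (ln t))"
    unfolding Z_integrand_def p1 p2 p3 by (simp add: exp_of_real[symmetric] algebra_simps)
  also have "(\<Sum>a\<in>?A. of_int (m a) * exp (a * of_real t)) * exp (of_real t) / exp ((s + 1) * of_real t)
           = (\<Sum>a\<in>?A. of_int (m a) * exp (- (s - a) * of_real t))"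
    unfolding sum_distrib_right sum_divide_distrib
  proof (intro sum.cong refl)
    fix a
    have "exp (a * of_real t) * exp (of_real t) = exp (- (s - a) * of_real t) * exp ((s + 1) * of_real t)"
      by (simp only: mult_exp_exp) (simp add: algebra_simps)
    thus "of_int (m a) * exp (a * of_real t) * exp (of_real t) / exp ((s + 1) * of_real t)
        = of_int (m a) * exp (- (s - a) * of_real t)"
      by (simp add: field_simps)
  qed
  finally show ?thesis by (simp add: FW_def Hf_def exp_of_real)
qed

lemma Z_subst:
  assumes fin: "finite {a. m a \<noteq> 0}"
  shows "Z_integrand (powsum m) w s absolutely_integrable_on {1<..}
           \<longleftrightarrow> FW {a. m a \<noteq> 0} (\<lambda>a. of_int (m a)) (\<lambda>a. s - a) w absolutely_integrable_on {0<..}"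
    and "Z_integrand (powsum m) w s absolutely_integrable_on {1<..} \<Longrightarrow>
         integral {1<..} (Z_integrand (powsum m) w s) = integral {0<..} (FW {a. m a \<noteq> 0} (\<lambda>a. of_int (m a)) (\<lambda>a. s - a) w)"
proof -
  let ?f = "Z_integrand (powsum m) w s"
  let ?F = "FW {a. m a \<noteq> 0} (\<lambda>a. of_int (m a)) (\<lambda>a. s - a) w"
  have der: "(exp has_field_derivative exp x) (at x within {0<..})" for x :: real
    by (auto intro!: derivative_eq_intros)
  have inj: "inj_on exp ({0<..} :: real set)" by (auto simp: inj_on_def)
  have cov: "(\<lambda>x. \<bar>exp x\<bar> *\<^sub>R ?f (exp x)) absolutely_integrable_on {0<..} \<and>
             integral {0<..} (\<lambda>x. \<bar>exp x\<bar> *\<^sub>R ?f (exp x)) = b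
         \<longleftrightarrow> ?f absolutely_integrable_on {1<..} \<and> integral {1<..} ?f = b" for b
    using has_absolute_integral_change_of_variables_real[of "{0<..}" exp exp ?f b, OF _ der inj]
    by (simp add: exp_image_pos)
  have eqF: "\<bar>exp x\<bar> *\<^sub>R ?f (exp x) = ?F x" if "x \<in> {0<..}" for x
    using Z_integrand_exp[OF fin, of x w s] that by (simp add: scaleR_conv_of_real exp_of_real)
  have ai: "(\<lambda>x. \<bar>exp x\<bar> *\<^sub>R ?f (exp x)) absolutely_integrable_on {0<..} \<longleftrightarrow> ?F absolutely_integrable_on {0<..}"
    by (rule absolutely_integrable_spike_eq[of "{}"]) (use eqF in auto)
  have ii: "integral {0<..} (\<lambda>x. \<bar>exp x\<bar> *\<^sub>R ?f (exp x)) = integral {0<..} ?F"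
    by (rule integral_cong) (use eqF in auto)
  show "?f absolutely_integrable_on {1<..} \<longleftrightarrow> ?F absolutely_integrable_on {0<..}"
    using cov[of "integral {1<..} ?f"] cov[of "integral {0<..} ?F"] ai ii by blast
  show "?f absolutely_integrable_on {1<..} \<Longrightarrow> integral {1<..} ?f = integral {0<..} ?F"
    using cov[of "integral {1<..} ?f"] ii by auto
qed



definition GG :: "(complex \<Rightarrow> int) \<Rightarrow> complex \<Rightarrow> complex \<Rightarrow> complex" where
  "GG m s w = (\<Sum>a\<in>{a. m a \<noteq> 0}. of_int (m a) * exp (- w * Ln (s - a)))"

lemma GG_holo: "GG m s holomorphic_on X"
  unfolding GG_def by (intro holomorphic_intros)

lemma Zext_exists:
  assumes fin: "finite {a. m a \<noteq> 0}" and l: "\<forall>a\<in>{a. m a \<noteq> 0}. Re (s - a) \<ge> 1"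
  shows "is_Z_ext (powsum m) s (GG m s)"
proof -
  have main: "Z_integrand (powsum m) w s absolutely_integrable_on {1<..} \<and> GG m s w = Z_int (powsum m) w s"
    if w: "Re w > 0" for w
  proof
    note F = FW_integral_pos[OF fin l w, of "\<lambda>a. of_int (m a)"]
    show "Z_integrand (powsum m) w s absolutely_integrable_on {1<..}"
      using Z_subst(1)[OF fin] F(1) by blast
    have "Gamma w \<noteq> 0" using w by (auto simp: Gamma_eq_zero_iff elim!: nonpos_Ints_cases)
    moreover have "integral {1<..} (Z_integrand (powsum m) w s) = Gamma w * GG m s w"
      using Z_subst[OF fin] F by (simp add: GG_def)
    ultimately show "GG m s w = Z_int (powsum m) w s"
      by (simp add: Z_int_def rGamma_inverse_Gamma)
  qed
  show ?thesis
    unfolding is_Z_ext_def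
  proof (rule exI[of _ UNIV], rule exI[of _ "{w. Re w > 0}"], intro conjI)
    have "(1::complex) \<in> {w. Re w > 0}" by simp
    thus "{w. Re w > 0} \<noteq> {}" by blast
  qed (use main GG_holo open_halfspace_Re_gt in auto)
qed

lemma Zext_eq:
  assumes fin: "finite {a. m a \<noteq> 0}" and l: "\<forall>a\<in>{a. m a \<noteq> 0}. Re (s - a) \<ge> 1"
    and g: "is_Z_ext (powsum m) s g"
  shows "deriv g 0 = - (\<Sum>a\<in>{a. m a \<noteq> 0}. of_int (m a) * Ln (s - a))"
proof -
  obtain D U where DU: "open D" "connected D" "0 \<in> D" "open U" "U \<noteq> {}" "U \<subseteq> D"
      "g holomorphic_on D"
      "\<And>w. w \<in> U \<Longrightarrow> Z_integrand (powsum m) w s absolutely_integrable_on {1<..} \<and> g w = Z_int (powsum m) w s"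
    using g unfolding is_Z_ext_def by blast
  have onU: "g w = GG m s w" if w: "w \<in> U" for w
  proof -
    obtain r where r: "r > 0" "ball w r \<subseteq> U" using DU(4) w open_contains_ball by blast
    have ib: "\<forall>v\<in>ball w r. FW {a. m a \<noteq> 0} (\<lambda>a. of_int (m a)) (\<lambda>a. s - a) v absolutely_integrable_on {0<..}"
      using r DU(8) Z_subst(1)[OF fin] by blast
    have "g w = rGamma w * integral {1<..} (Z_integrand (powsum m) w s)"
      using DU(8)[OF w] by (simp add: Z_int_def)
    also have "\<dots> = rGamma w * integral {0<..} (FW {a. m a \<noteq> 0} (\<lambda>a. of_int (m a)) (\<lambda>a. s - a) w)"
      using Z_subst(2)[OF fin] DU(8)[OF w] by simp
    also have "\<dots> = GG m s w"
      using continuation[OF fin l r(1) ib] by (simp add: GG_def)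
    finally show ?thesis .
  qed
  have onD: "g w = GG m s w" if "w \<in> D" for w
    by (rule analytic_continuation_open[where s = U and s' = D]) (use DU onU GG_holo that in auto)
  have "eventually (\<lambda>w. g w = GG m s w) (nhds 0)"
    using DU(1,3) onD by (intro eventually_nhds_in_open[THEN eventually_mono]) auto
  hence dg: "deriv g 0 = deriv (GG m s) 0" by (rule deriv_cong_ev) simp
  have d0: "(GG m s has_field_derivative (\<Sum>a\<in>{a. m a \<noteq> 0}. - (Ln (s - a) * of_int (m a)))) (at 0)"
    unfolding GG_def by (auto intro!: derivative_eq_intros)
  have eq: "(\<Sum>a\<in>{a. m a \<noteq> 0}. - (Ln (s - a) * of_int (m a))) = - (\<Sum>a\<in>{a. m a \<noteq> 0}. of_int (m a) * Ln (s - a))"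
    by (subst sum_negf[symmetric], rule sum.cong) auto
  from d0 have "deriv (GG m s) 0 = - (\<Sum>a\<in>{a. m a \<noteq> 0}. of_int (m a) * Ln (s - a))"
    unfolding eq by (rule DERIV_imp_deriv)
  with dg show "deriv g 0 = - (\<Sum>a\<in>{a. m a \<noteq> 0}. of_int (m a) * Ln (s - a))" by simp
qed

lemma zeta_val_eq:
  assumes fin: "finite {a. m a \<noteq> 0}" and l: "\<forall>a\<in>{a. m a \<noteq> 0}. Re (s - a) \<ge> 1"
  shows "zeta_val (powsum m) s = (\<Prod>a\<in>{a. m a \<noteq> 0}. (1 / (s - a)) powi m a)"
proof -
  have ex: "is_Z_ext (powsum m) s (SOME g. is_Z_ext (powsum m) s g)"
    using someI[of "\<lambda>g. is_Z_ext (powsum m) s g", OF Zext_exists[OF fin l]] .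
  have "zeta_val (powsum m) s = exp (- (\<Sum>a\<in>{a. m a \<noteq> 0}. of_int (m a) * Ln (s - a)))"
    unfolding zeta_val_def Zext_eq[OF fin l ex] ..
  also have "\<dots> = (\<Prod>a\<in>{a. m a \<noteq> 0}. exp (of_int (m a) * (- Ln (s - a))))"
    by (simp add: exp_sum[OF fin, symmetric] sum_negf)
  also have "\<dots> = (\<Prod>a\<in>{a. m a \<noteq> 0}. (1 / (s - a)) powi m a)"
  proof (intro prod.cong refl)
    fix a assume a: "a \<in> {a. m a \<noteq> 0}"
    have "s - a \<noteq> 0" using l a by force
    hence eq: "exp (- Ln (s - a)) = 1 / (s - a)" by (simp add: exp_minus divide_inverse)
    have "exp (- Ln (s - a)) powi m a = exp (of_int (m a) * (- Ln (s - a)))" by (rule exp_power_int)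
    with eq show "exp (of_int (m a) * (- Ln (s - a))) = (1 / (s - a)) powi m a"
      by simp
  qed
  finally show ?thesis .
qed



definition PP :: "(complex \<Rightarrow> int) \<Rightarrow> complex \<Rightarrow> complex" where
  "PP m s = (\<Prod>a\<in>{a. m a \<noteq> 0}. (1 / (s - a)) powi m a)"

lemma PP_mero: "PP m meromorphic_on X"
  unfolding PP_def by (intro meromorphic_intros)

lemma PP_analytic: "s \<notin> {a. m a \<noteq> 0} \<Longrightarrow> PP m analytic_on {s}"
  unfolding PP_def by (intro analytic_intros) auto

lemma sigma_bound:
  assumes fin: "finite {a. m a \<noteq> 0}" and s: "Re s > (\<Sum>a\<in>{a. m a \<noteq> 0}. \<bar>Re a\<bar>) + 1"
  shows "\<forall>a\<in>{a. m a \<noteq> 0}. Re (s - a) \<ge> 1"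
proof
  fix a assume a: "a \<in> {a. m a \<noteq> 0}"
  have "\<bar>Re a\<bar> \<le> (\<Sum>a\<in>{a. m a \<noteq> 0}. \<bar>Re a\<bar>)"
    by (rule member_le_sum[OF a]) (use fin in auto)
  thus "Re (s - a) \<ge> 1" using s by simp
qed

lemma zeta_cont_exists:
  assumes fin: "finite {a. m a \<noteq> 0}"
  shows "is_zeta_cont (powsum m) (remove_sings (PP m))"
  unfolding is_zeta_cont_def
proof (intro conjI exI[of _ "(\<Sum>a\<in>{a. m a \<noteq> 0}. \<bar>Re a\<bar>) + 1"] allI impI)
  show "remove_sings (PP m) nicely_meromorphic_on UNIV"
    by (rule remove_sings_nicely_meromorphic[OF PP_mero])
next
  fix s assume s: "(\<Sum>a\<in>{a. m a \<noteq> 0}. \<bar>Re a\<bar>) + 1 < Re s"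
  note l = sigma_bound[OF fin s]
  show "\<exists>g. is_Z_ext (powsum m) s g" using Zext_exists[OF fin l] by blast
  have "s \<notin> {a. m a \<noteq> 0}" using l by force
  hence "remove_sings (PP m) s = PP m s" by (intro remove_sings_at_analytic PP_analytic)
  thus "remove_sings (PP m) s = zeta_val (powsum m) s"
    using zeta_val_eq[OF fin l] by (simp add: PP_def)
qed

lemma zeta_powsum:
  assumes fin: "finite {a. m a \<noteq> 0}" and s: "s \<notin> {a. m a \<noteq> 0}"
  shows "zeta (powsum m) s = PP m s"
proof -
  define f where "f = zeta (powsum m)"
  have zc: "is_zeta_cont (powsum m) f"
    unfolding f_def zeta_def using someI[of "is_zeta_cont (powsum m)", OF zeta_cont_exists[OF fin]] .
  then obtain \<sigma> where nm: "f nicely_meromorphic_on UNIV"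
    and \<sigma>: "\<And>s. Re s > \<sigma> \<Longrightarrow> f s = zeta_val (powsum m) s"
    unfolding is_zeta_cont_def by blast
  define \<sigma>' where "\<sigma>' = max \<sigma> ((\<Sum>a\<in>{a. m a \<noteq> 0}. \<bar>Re a\<bar>) + 1)"
  have eqH: "f z = PP m z" if "Re z > \<sigma>'" for z
  proof -
    have l: "\<forall>a\<in>{a. m a \<noteq> 0}. Re (z - a) \<ge> 1" using that sigma_bound[OF fin, of z] by (simp add: \<sigma>'_def)
    show ?thesis using \<sigma>[of z] that zeta_val_eq[OF fin l] by (simp add: \<sigma>'_def PP_def)
  qed
  define h where "h z = f z - PP m z" for z
  have fmero: "f meromorphic_on UNIV" using nm by (simp add: nicely_meromorphic_on_def)
  have hmero: "h meromorphic_on UNIV"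
    unfolding h_def by (intro meromorphic_intros fmero PP_mero)
  have Hopen: "open {z. Re z > \<sigma>'}" by (rule open_halfspace_Re_gt)
  have rs0: "remove_sings h z = 0" if "Re z > \<sigma>'" for z
  proof (rule remove_sings_eqI)
    have "eventually (\<lambda>w. w \<in> {z. Re z > \<sigma>'}) (at z)"
      using that Hopen by (intro eventually_at_in_open') auto
    hence "eventually (\<lambda>w. h w = 0) (at z)"
      by eventually_elim (auto simp: h_def eqH)
    thus "h \<midarrow>z\<rightarrow> 0" by (rule tendsto_eventually)
  qed
  define z0 :: complex where "z0 = of_real (\<sigma>' + 1)"
  have z0: "Re z0 > \<sigma>'" by (simp add: z0_def)
  have freq: "frequently (\<lambda>z. remove_sings h z = 0) (at z0)"
  proof (rule eventually_frequently)
    show "at z0 \<noteq> bot" by simp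
    have "eventually (\<lambda>w. w \<in> {z. Re z > \<sigma>'}) (at z0)"
      using z0 Hopen by (intro eventually_at_in_open') auto
    thus "eventually (\<lambda>z. remove_sings h z = 0) (at z0)"
      by eventually_elim (auto intro: rs0)
  qed
  have all0: "remove_sings h w = 0" for w
    by (rule frequently_eq_meromorphic_imp_constant[OF freq remove_sings_nicely_meromorphic[OF hmero]]) auto
  have "isolated_singularity_at h s"
    by (rule meromorphic_on_isolated_singularity[OF meromorphic_on_subset[OF hmero]]) auto
  hence "eventually (\<lambda>w. remove_sings h w = h w) (at s)" by (rule eventually_remove_sings_eq_at)
  hence "eventually (\<lambda>w. h w = 0) (at s)" by eventually_elim (simp add: all0)
  hence h0: "h \<midarrow>s\<rightarrow> 0" by (rule tendsto_eventually)
  have Pc: "PP m \<midarrow>s\<rightarrow> PP m s"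
    using PP_analytic[OF s] analytic_at_imp_isCont isContD by blast
  have flim: "f \<midarrow>s\<rightarrow> PP m s"
  proof -
    have "(\<lambda>z. h z + PP m z) \<midarrow>s\<rightarrow> 0 + PP m s" by (intro tendsto_add h0 Pc)
    thus ?thesis by (simp add: h_def)
  qed
  from nm have "(is_pole f s \<and> f s = 0) \<or> f \<midarrow>s\<rightarrow> f s"
    by (auto simp: nicely_meromorphic_on_def)
  thus ?thesis
  proof
    assume "is_pole f s \<and> f s = 0"
    hence "is_pole f s" by blast
    with flim have False unfolding is_pole_def
      by (meson at_neq_bot not_tendsto_and_filterlim_at_infinity)
    thus ?thesis ..
  next
    assume "f \<midarrow>s\<rightarrow> f s"
    with flim have "f s = PP m s" using tendsto_unique[OF at_neq_bot] by blast
    thus ?thesis by (simp add: f_def)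
  qed
qed



lemma zeta_cong:
  assumes "\<And>u. u > 1 \<Longrightarrow> N u = N' u"
  shows "zeta N = zeta N'"
proof -
  have zi: "Z_integrand N w s u = Z_integrand N' w s u" if "u \<in> {1<..}" for w s u
    using assms that by (simp add: Z_integrand_def)
  have ai: "Z_integrand N w s absolutely_integrable_on {1<..} \<longleftrightarrow> Z_integrand N' w s absolutely_integrable_on {1<..}" for w s
    by (rule absolutely_integrable_spike_eq[of "{}"]) (use zi in auto)
  have zint: "Z_int N w s = Z_int N' w s" for w s
    unfolding Z_int_def by (subst integral_cong[OF zi]) auto
  have extZ: "is_Z_ext N = is_Z_ext N'"
    by (intro ext) (simp add: is_Z_ext_def ai zint)
  have zv: "zeta_val N = zeta_val N'"
    by (intro ext) (simp add: zeta_val_def extZ)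
  have zc: "is_zeta_cont N = is_zeta_cont N'"
    by (intro ext) (simp add: is_zeta_cont_def extZ zv)
  show ?thesis unfolding zeta_def zc ..
qed

lemma dual_powsum: "u > 0 \<Longrightarrow> dual (powsum m) u = powsum (\<lambda>a. m (- a)) u"
proof -
  assume u: "u > 0"
  have "{a. m (- a) \<noteq> 0} = uminus ` {a. m a \<noteq> 0}"
    by (auto intro: image_eqI[of _ _ "- x" for x])
  hence "powsum (\<lambda>a. m (- a)) u = (\<Sum>a\<in>uminus ` {a. m a \<noteq> 0}. of_int (m (- a)) * of_real u powr a)"
    by (simp add: powsum_def)
  also have "\<dots> = (\<Sum>a\<in>{a. m a \<noteq> 0}. of_int (m a) * of_real u powr (- a))"
    by (subst sum.reindex) (auto simp: inj_on_def)
  also have "\<dots> = powsum m (1 / u)"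
  proof -
    have "Ln (1 / complex_of_real u) = Ln (of_real (1/u))" by simp
    also have "\<dots> = of_real (ln (1/u))" using u by (intro Ln_of_real) auto
    also have "ln (1/u) = - ln u" using u by (simp add: ln_div)
    finally have L: "Ln (1 / complex_of_real u) = - of_real (ln u)" by simp
    show ?thesis unfolding powsum_def
      by (intro sum.cong refl) (use u in \<open>simp add: powr_def Ln_of_real L\<close>)
  qed
  finally show ?thesis by (simp add: dual_def)
qed

lemma zeta_dual:
  assumes fin: "finite {a. m a \<noteq> 0}" and s: "- s \<notin> {a. m a \<noteq> 0}"
  shows "zeta (dual (powsum m)) s = (\<Prod>a\<in>{a. m a \<noteq> 0}. (1 / (s + a)) powi m a)"
proof -
  have A': "{a. m (- a) \<noteq> 0} = uminus ` {a. m a \<noteq> 0}"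
    by (auto intro: image_eqI[of _ _ "- x" for x])
  have fin': "finite {a. m (- a) \<noteq> 0}" using fin A' by simp
  have s': "s \<notin> {a. m (- a) \<noteq> 0}" using s by simp
  have "zeta (dual (powsum m)) s = zeta (powsum (\<lambda>a. m (- a))) s"
    by (subst zeta_cong[of "dual (powsum m)" "powsum (\<lambda>a. m (- a))"]) (auto simp: dual_powsum)
  also have "\<dots> = (\<Prod>a\<in>{a. m (- a) \<noteq> 0}. (1 / (s - a)) powi m (- a))"
    using zeta_powsum[OF fin' s'] by (simp add: PP_def)
  also have "\<dots> = (\<Prod>a\<in>{a. m a \<noteq> 0}. (1 / (s + a)) powi m a)"
    unfolding A' by (subst prod.reindex) (auto simp: inj_on_def)
  finally show ?thesis .
qed

lemma minus_one_powi_sum: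
  assumes "finite A"
  shows "(-1::complex) powi (\<Sum>a\<in>A. k a) = (\<Prod>a\<in>A. (-1) powi k a)"
  using assms by (induction A rule: finite_induct) (auto simp: power_int_add)

lemma minus_one_powi_neg: "(-1::complex) powi (- k) = (-1) powi k"
  by (simp add: power_int_minus power_int_inverse[symmetric])

lemma PP_nonzero: "finite {a. m a \<noteq> 0} \<Longrightarrow> s \<notin> {a. m a \<noteq> 0} \<Longrightarrow> PP m s \<noteq> 0"
  unfolding PP_def by (subst prod_zero_iff) auto

lemma epsilon_powsum:
  assumes fin: "finite {a. m a \<noteq> 0}" and s: "s \<notin> {a. m a \<noteq> 0}"
  shows "epsilon (powsum m) s = (-1) powi (\<Sum>a\<in>{a. m a \<noteq> 0}. m a)"
proof -
  have s2: "- (- s) \<notin> {a. m a \<noteq> 0}" using s by simp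
  have "epsilon (powsum m) s = (\<Prod>a\<in>{a. m a \<noteq> 0}. (1 / (- s + a)) powi m a) / (\<Prod>a\<in>{a. m a \<noteq> 0}. (1 / (s - a)) powi m a)"
    unfolding epsilon_def zeta_dual[OF fin s2] zeta_powsum[OF fin s] PP_def ..
  also have "\<dots> = (\<Prod>a\<in>{a. m a \<noteq> 0}. (1 / (- s + a)) powi m a / (1 / (s - a)) powi m a)"
    by (rule prod_dividef[symmetric])
  also have "\<dots> = (\<Prod>a\<in>{a. m a \<noteq> 0}. (-1) powi m a)"
  proof (intro prod.cong refl)
    fix a assume a: "a \<in> {a. m a \<noteq> 0}"
    have sa: "s - a \<noteq> 0" using a s by auto
    have "1 / (- s + a) = (-1) * (1 / (s - a))" using sa by (simp add: field_simps)
    hence "(1 / (- s + a)) powi m a = (-1) powi m a * (1 / (s - a)) powi m a"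
      by (simp only: power_int_mult_distrib)
    thus "(1 / (- s + a)) powi m a / (1 / (s - a)) powi m a = (-1) powi m a"
      using sa by simp
  qed
  also have "\<dots> = (-1) powi (\<Sum>a\<in>{a. m a \<noteq> 0}. m a)"
    by (rule minus_one_powi_sum[OF fin, symmetric])
  finally show ?thesis .
qed



lemma exp_indep_complex:
  fixes d :: "complex \<Rightarrow> complex"
  assumes "finite T" "\<And>z. (\<Sum>x\<in>T. d x * exp (x * z)) = 0"
  shows "\<forall>x\<in>T. d x = 0"
  using assms
proof (induction T arbitrary: d rule: finite_induct)
  case empty thus ?case by simp
next
  case (insert a0 T d)
  have E0: "(\<lambda>z. \<Sum>x\<in>insert a0 T. d x * exp (x * z)) = (\<lambda>z. 0)"
    using insert.prems by (intro ext) simp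
  have dE: "((\<lambda>z. \<Sum>x\<in>insert a0 T. d x * exp (x * z)) has_field_derivative (\<Sum>x\<in>insert a0 T. d x * (exp (x * z) * x))) (at z)" for z
    by (auto intro!: derivative_eq_intros sum.cong simp: mult_ac)
  have d0: "(\<Sum>x\<in>insert a0 T. d x * (exp (x * z) * x)) = 0" for z
  proof -
    have "((\<lambda>z. 0) has_field_derivative (\<Sum>x\<in>insert a0 T. d x * (exp (x * z) * x))) (at z)"
      using dE[of z] unfolding E0 .
    moreover have "((\<lambda>z. 0::complex) has_field_derivative 0) (at z)" by simp
    ultimately show ?thesis by (rule DERIV_unique)
  qed
  have "(\<Sum>x\<in>T. (d x * (x - a0)) * exp (x * z)) = 0" for z
  proof -
    have "(\<Sum>x\<in>T. (d x * (x - a0)) * exp (x * z))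
        = (\<Sum>x\<in>insert a0 T. d x * (exp (x * z) * x)) - a0 * (\<Sum>x\<in>insert a0 T. d x * exp (x * z))"
      using insert.hyps by (simp add: sum_distrib_left sum_subtractf[symmetric] algebra_simps)
    also have "\<dots> = 0" using d0[of z] insert.prems[of z] by simp
    finally show ?thesis .
  qed
  hence IH: "\<forall>x\<in>T. d x * (x - a0) = 0" by (rule insert.IH)
  hence T0: "\<forall>x\<in>T. d x = 0" using insert.hyps(2) by auto
  have "d a0 = 0" using insert.prems[of 0] insert.hyps T0 by simp
  with T0 show ?case by simp
qed

lemma exp_indep:
  fixes d :: "complex \<Rightarrow> complex"
  assumes fin: "finite T" and h: "\<And>t::real. (\<Sum>x\<in>T. d x * exp (x * of_real t)) = 0"
  shows "\<forall>x\<in>T. d x = 0"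
proof (rule exp_indep_complex[OF fin])
  fix z
  show "(\<Sum>x\<in>T. d x * exp (x * z)) = 0"
  proof (rule analytic_continuation[where S = UNIV and U = "range of_real" and \<xi> = 0 and f = "\<lambda>z. \<Sum>x\<in>T. d x * exp (x * z)"])
    show "0 islimpt range complex_of_real"
      unfolding islimpt_approachable
    proof (intro allI impI)
      fix e :: real assume e: "e > 0"
      show "\<exists>x'\<in>range complex_of_real. x' \<noteq> 0 \<and> dist x' 0 < e"
      proof (rule bexI[of _ "of_real (e/2)"])
        show "complex_of_real (e / 2) \<in> range complex_of_real" by (rule rangeI)
      qed (use e in auto)
    qed
  qed (auto intro!: holomorphic_intros simp: h)
qed

lemma sum_support_exp:
  fixes k :: "complex \<Rightarrow> int"
  assumes "finite T" "{x. k x \<noteq> 0} \<subseteq> T"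
  shows "(\<Sum>x\<in>T. of_int (k x) * f x) = (\<Sum>x\<in>{x. k x \<noteq> 0}. of_int (k x) * (f x :: complex))"
  by (rule sum.mono_neutral_right) (use assms in auto)

lemma func_coeff:
  assumes fin: "finite {a. m a \<noteq> 0}"
    and fe: "\<forall>u>0. powsum m (1 / u) = c * of_real u powr (- \<omega>) * powsum m u"
  shows "of_int (m a) = c * of_int (m (\<omega> - a))"
proof -
  define A where "A = {a. m a \<noteq> 0}"
  define T where "T = uminus ` A \<union> (\<lambda>b. b - \<omega>) ` A"
  have finT: "finite T" using fin by (simp add: T_def A_def)
  define d where "d x = of_int (m (- x)) - c * of_int (m (x + \<omega>))" for x
  have S1: "(\<Sum>x\<in>T. of_int (m (- x)) * exp (x * of_real t)) = (\<Sum>a\<in>A. of_int (m a) * exp (- a * of_real t))" for t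
  proof -
    have "{x. m (- x) \<noteq> 0} \<subseteq> T" by (auto simp: T_def A_def intro: image_eqI[of _ _ "- x" for x])
    hence "(\<Sum>x\<in>T. of_int (m (- x)) * exp (x * of_real t)) = (\<Sum>x\<in>{x. m (- x) \<noteq> 0}. of_int (m (- x)) * exp (x * of_real t))"
      by (intro sum_support_exp[OF finT])
    also have "{x. m (- x) \<noteq> 0} = uminus ` A" by (auto simp: A_def intro: image_eqI[of _ _ "- x" for x])
    also have "(\<Sum>x\<in>uminus ` A. of_int (m (- x)) * exp (x * of_real t)) = (\<Sum>a\<in>A. of_int (m a) * exp (- a * of_real t))"
      by (subst sum.reindex) (auto simp: inj_on_def)
    finally show ?thesis .
  qed
  have S2: "(\<Sum>x\<in>T. of_int (m (x + \<omega>)) * exp (x * of_real t)) = (\<Sum>b\<in>A. of_int (m b) * exp ((b - \<omega>) * of_real t))" for t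
  proof -
    have "{x. m (x + \<omega>) \<noteq> 0} \<subseteq> T" by (auto simp: T_def A_def intro: image_eqI[of _ _ "x + \<omega>" for x])
    hence "(\<Sum>x\<in>T. of_int (m (x + \<omega>)) * exp (x * of_real t)) = (\<Sum>x\<in>{x. m (x + \<omega>) \<noteq> 0}. of_int (m (x + \<omega>)) * exp (x * of_real t))"
      by (intro sum_support_exp[OF finT])
    also have "{x. m (x + \<omega>) \<noteq> 0} = (\<lambda>b. b - \<omega>) ` A" by (auto simp: A_def intro: image_eqI[of _ _ "x + \<omega>" for x])
    also have "(\<Sum>x\<in>(\<lambda>b. b - \<omega>) ` A. of_int (m (x + \<omega>)) * exp (x * of_real t)) = (\<Sum>b\<in>A. of_int (m b) * exp ((b - \<omega>) * of_real t))"
      by (subst sum.reindex) (auto simp: inj_on_def)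
    finally show ?thesis .
  qed
  have eq_t: "(\<Sum>a\<in>A. of_int (m a) * exp (- a * of_real t)) = c * (\<Sum>b\<in>A. of_int (m b) * exp ((b - \<omega>) * of_real t))" for t
  proof -
    have L1: "Ln (complex_of_real (1 / exp t)) = - of_real t"
    proof -
      have "Ln (complex_of_real (1 / exp t)) = of_real (ln (1 / exp t))" by (intro Ln_of_real) auto
      also have "ln (1 / exp t) = - t" by (simp add: ln_div)
      finally show ?thesis by simp
    qed
    have "powsum m (1 / exp t) = (\<Sum>a\<in>A. of_int (m a) * exp (- a * of_real t))"
      unfolding powsum_def A_def
      by (intro sum.cong refl) (simp add: powr_def L1 del: of_real_divide)
    moreover have "powsum m (exp t) = (\<Sum>b\<in>A. of_int (m b) * exp (b * of_real t))"
      unfolding powsum_def A_def by (intro sum.cong refl) (simp add: powr_def Ln_of_real mult.commute)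
    moreover have "of_real (exp t) powr (- \<omega>) = exp (- \<omega> * of_real t)"
      by (simp add: powr_def Ln_of_real)
    moreover have "exp (- \<omega> * of_real t) * (\<Sum>b\<in>A. of_int (m b) * exp (b * of_real t))
               = (\<Sum>b\<in>A. of_int (m b) * exp ((b - \<omega>) * of_real t))"
      unfolding sum_distrib_left
    proof (intro sum.cong refl)
      fix b
      have "exp (- \<omega> * of_real t) * exp (b * of_real t) = exp ((b - \<omega>) * of_real t)"
        by (simp only: mult_exp_exp) (simp add: algebra_simps)
      thus "exp (- \<omega> * of_real t) * (of_int (m b) * exp (b * of_real t)) = of_int (m b) * exp ((b - \<omega>) * of_real t)"
        by (simp add: algebra_simps)
    qed
    ultimately show ?thesis using fe[rule_format, of "exp t"] by (simp add: mult.assoc)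
  qed
  have "\<forall>x\<in>T. d x = 0"
  proof (rule exp_indep[OF finT])
    fix t :: real
    have "(\<Sum>x\<in>T. d x * exp (x * of_real t))
        = (\<Sum>x\<in>T. of_int (m (- x)) * exp (x * of_real t)) - c * (\<Sum>x\<in>T. of_int (m (x + \<omega>)) * exp (x * of_real t))"
      by (simp add: d_def sum_subtractf sum_distrib_left algebra_simps)
    also have "\<dots> = 0" using S1[of t] S2[of t] eq_t[of t] by simp
    finally show "(\<Sum>x\<in>T. d x * exp (x * of_real t)) = 0" .
  qed
  show ?thesis
  proof (cases "- a \<in> T")
    case True
    hence "d (- a) = 0" using \<open>\<forall>x\<in>T. d x = 0\<close> by blast
    thus ?thesis by (simp add: d_def)
  next
    case False
    hence "m a = 0" by (auto simp: T_def A_def intro: image_eqI[of _ _ a])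
    moreover have "m (\<omega> - a) = 0"
    proof (rule ccontr)
      assume "m (\<omega> - a) \<noteq> 0"
      hence "(\<omega> - a) - \<omega> \<in> T" unfolding T_def A_def by (intro UnI2 imageI) simp
      thus False using False by simp
    qed
    ultimately show ?thesis by simp
  qed
qed



lemma func_eq:
  assumes fin: "finite {a. m a \<noteq> 0}"
    and nz: "\<exists>u>0. powsum m u \<noteq> 0"
    and fe: "\<forall>u>0. powsum m (1 / u) = c * of_real u powr (- \<omega>) * powsum m u"
  shows "(c = 1 \<or> c = -1) \<and>
         (\<forall>s. s \<notin> {a. m a \<noteq> 0} \<and> \<omega> - s \<notin> {a. m a \<noteq> 0} \<longrightarrow>
            zeta (powsum m) (\<omega> - s) = (-1) powi (\<Sum>a\<in>{a. m a \<noteq> 0}. m a) * zeta (powsum m) s powr c)"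
proof -
  define A where "A = {a. m a \<noteq> 0}"
  have coef: "of_int (m a) = c * of_int (m (\<omega> - a))" for a
    by (rule func_coeff[OF fin fe])
  obtain a0 where a0: "m a0 \<noteq> 0"
  proof (cases "\<exists>a. m a \<noteq> 0")
    case False
    hence "powsum m u = 0" for u by (simp add: powsum_def)
    with nz show ?thesis by blast
  qed blast
  have "of_int (m a0) = c * (c * of_int (m a0))"
    using coef[of a0] coef[of "\<omega> - a0"] by simp
  hence "c * c = 1" using a0 by (metis mult.assoc mult_cancel_right1 of_int_eq_0_iff)
  hence c: "c = 1 \<or> c = -1" by (simp add: square_eq_1_iff)
  define \<epsilon> :: int where "\<epsilon> = (if c = 1 then 1 else -1)"
  have kint: "m (\<omega> - a) = \<epsilon> * m a" for a
  proof (cases "c = 1")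
    case True
    hence "(of_int (m a) :: complex) = of_int (m (\<omega> - a))" using coef[of a] by simp
    thus ?thesis using True by (simp add: \<epsilon>_def)
  next
    case False
    hence c1: "c = -1" using c by simp
    hence "(of_int (m a) :: complex) = of_int (- m (\<omega> - a))" using coef[of a] by simp
    hence "m a = - m (\<omega> - a)" by (simp only: of_int_eq_iff)
    thus ?thesis using False by (simp add: \<epsilon>_def)
  qed
  have img: "(\<lambda>b. \<omega> - b) ` A = A"
  proof safe
    fix b assume "b \<in> A" thus "\<omega> - b \<in> A" using kint[of b] by (auto simp: A_def \<epsilon>_def split: if_splits)
  next
    fix a assume a: "a \<in> A"
    hence "\<omega> - a \<in> A" using kint[of a] by (auto simp: A_def \<epsilon>_def split: if_splits)
    thus "a \<in> (\<lambda>b. \<omega> - b) ` A" by (intro image_eqI[of _ _ "\<omega> - a"]) auto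
  qed
  have inj: "inj_on (\<lambda>b. \<omega> - b) A" by (auto simp: inj_on_def)
  have fe2: "zeta (powsum m) (\<omega> - s) = (-1) powi (\<Sum>a\<in>A. m a) * zeta (powsum m) s powr c"
    if s: "s \<notin> A" "\<omega> - s \<notin> A" for s
  proof -
    have Pnz: "PP m s \<noteq> 0" using PP_nonzero[OF fin] s by (simp add: A_def)
    have "zeta (powsum m) (\<omega> - s) = (\<Prod>a\<in>A. (1 / (\<omega> - s - a)) powi m a)"
      using zeta_powsum[OF fin] s by (simp add: PP_def A_def)
    also have "\<dots> = (\<Prod>a\<in>(\<lambda>b. \<omega> - b) ` A. (1 / (\<omega> - s - a)) powi m a)" by (simp only: img)
    also have "\<dots> = (\<Prod>b\<in>A. (1 / (\<omega> - s - (\<omega> - b))) powi m (\<omega> - b))"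
      by (subst prod.reindex[OF inj]) simp
    also have "\<dots> = (\<Prod>b\<in>A. ((-1) * (1 / (s - b))) powi (\<epsilon> * m b))"
    proof (intro prod.cong refl)
      fix b assume b: "b \<in> A"
      have "s - b \<noteq> 0" using b s by auto
      hence "1 / (\<omega> - s - (\<omega> - b)) = (-1) * (1 / (s - b))" by (simp add: field_simps)
      thus "(1 / (\<omega> - s - (\<omega> - b))) powi m (\<omega> - b) = ((-1) * (1 / (s - b))) powi (\<epsilon> * m b)"
        by (simp add: kint)
    qed
    also have "\<dots> = (-1) powi (\<Sum>a\<in>A. m a) * zeta (powsum m) s powr c"
    proof (cases "c = 1")
      case True
      have "(\<Prod>b\<in>A. ((-1) * (1 / (s - b))) powi (\<epsilon> * m b)) = (\<Prod>b\<in>A. (-1) powi m b * (1 / (s - b)) powi m b)"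
      proof (intro prod.cong refl)
        fix b
        have "\<epsilon> = 1" using True by (simp add: \<epsilon>_def)
        thus "((-1) * (1 / (s - b))) powi (\<epsilon> * m b) = (-1) powi m b * (1 / (s - b)) powi m b"
          by (simp only: mult_1 power_int_mult_distrib)
      qed
      also have "\<dots> = (\<Prod>b\<in>A. (-1) powi m b) * PP m s" by (simp add: prod.distrib PP_def A_def)
      also have "(\<Prod>b\<in>A. (-1::complex) powi m b) = (-1) powi (\<Sum>a\<in>A. m a)"
        using minus_one_powi_sum[of A m] fin by (simp add: A_def)
      also have "PP m s = zeta (powsum m) s powr c"
        using True Pnz zeta_powsum[OF fin, of s] s by (simp add: powr_def A_def)
      finally show ?thesis .
    next
      case False
      hence c1: "c = -1" using c by simp
      have "(\<Prod>b\<in>A. ((-1) * (1 / (s - b))) powi (\<epsilon> * m b)) = (\<Prod>b\<in>A. (-1) powi m b * inverse ((1 / (s - b)) powi m b))"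
      proof (intro prod.cong refl)
        fix b
        have "((-1) * (1 / (s - b))) powi (\<epsilon> * m b) = (-1) powi (- m b) * (1 / (s - b)) powi (- m b)"
        proof -
          have "\<epsilon> * m b = - m b" using False by (simp add: \<epsilon>_def)
          thus ?thesis by (simp only: power_int_mult_distrib)
        qed
        also have "(-1::complex) powi (- m b) = (-1) powi m b" by (rule minus_one_powi_neg)
        also have "(1 / (s - b)) powi (- m b) = inverse ((1 / (s - b)) powi m b)" by (rule power_int_minus)
        finally show "((-1) * (1 / (s - b))) powi (\<epsilon> * m b) = (-1) powi m b * inverse ((1 / (s - b)) powi m b)" .
      qed
      also have "\<dots> = (\<Prod>b\<in>A. (-1) powi m b) * inverse (PP m s)"
        by (simp add: prod.distrib PP_def A_def prod_inversef[symmetric] o_def)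
      also have "(\<Prod>b\<in>A. (-1::complex) powi m b) = (-1) powi (\<Sum>a\<in>A. m a)"
        using minus_one_powi_sum[of A m] fin by (simp add: A_def)
      also have "inverse (PP m s) = zeta (powsum m) s powr c"
        using c1 Pnz zeta_powsum[OF fin, of s] s by (simp add: powr_def A_def exp_minus)
      finally show ?thesis .
    qed
    finally show ?thesis .
  qed
  show ?thesis using c fe2 by (simp add: A_def)
qed


theorem proposition3p6:
  fixes m :: "complex \<Rightarrow> int"
  assumes fin: "finite {a. m a \<noteq> 0}"
  shows "(\<forall>s. s \<notin> {a. m a \<noteq> 0} \<longrightarrow>
            zeta (powsum m) s = (\<Prod>a\<in>{a. m a \<noteq> 0}. (1 / (s - a)) powi m a))
       \<and> (\<forall>s. - s \<notin> {a. m a \<noteq> 0} \<longrightarrow>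
            zeta (dual (powsum m)) s = (\<Prod>a\<in>{a. m a \<noteq> 0}. (1 / (s + a)) powi m a))
       \<and> (\<forall>s. s \<notin> {a. m a \<noteq> 0} \<longrightarrow>
            epsilon (powsum m) s = (-1) powi (\<Sum>a\<in>{a. m a \<noteq> 0}. m a))
       \<and> (\<forall>c \<omega> :: complex.
            (\<exists>u>0. powsum m u \<noteq> 0) \<and>
            (\<forall>u>0. powsum m (1 / u) = c * of_real u powr (- \<omega>) * powsum m u)
            \<longrightarrow> (c = 1 \<or> c = -1) \<and>
                (\<forall>s. s \<notin> {a. m a \<noteq> 0} \<and> \<omega> - s \<notin> {a. m a \<noteq> 0} \<longrightarrow>
                   zeta (powsum m) (\<omega> - s)
                     = (-1) powi (\<Sum>a\<in>{a. m a \<noteq> 0}. m a) * zeta (powsum m) s powr c))"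
proof (intro conjI)
  show "\<forall>s. s \<notin> {a. m a \<noteq> 0} \<longrightarrow> zeta (powsum m) s = (\<Prod>a\<in>{a. m a \<noteq> 0}. (1 / (s - a)) powi m a)"
    using zeta_powsum[OF fin] by (simp add: PP_def)
  show "\<forall>s. - s \<notin> {a. m a \<noteq> 0} \<longrightarrow> zeta (dual (powsum m)) s = (\<Prod>a\<in>{a. m a \<noteq> 0}. (1 / (s + a)) powi m a)"
    using zeta_dual[OF fin] by blast
  show "\<forall>s. s \<notin> {a. m a \<noteq> 0} \<longrightarrow> epsilon (powsum m) s = (-1) powi (\<Sum>a\<in>{a. m a \<noteq> 0}. m a)"
    using epsilon_powsum[OF fin] by blast
  show "\<forall>c \<omega> :: complex.
            (\<exists>u>0. powsum m u \<noteq> 0) \<and>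
            (\<forall>u>0. powsum m (1 / u) = c * of_real u powr (- \<omega>) * powsum m u)
            \<longrightarrow> (c = 1 \<or> c = -1) \<and>
                (\<forall>s. s \<notin> {a. m a \<noteq> 0} \<and> \<omega> - s \<notin> {a. m a \<noteq> 0} \<longrightarrow>
                   zeta (powsum m) (\<omega> - s)
                     = (-1) powi (\<Sum>a\<in>{a. m a \<noteq> 0}. m a) * zeta (powsum m) s powr c)"
    using func_eq[OF fin] by blast
qed

end
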